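(* Let $q$ be a power of an odd prime $p$, $s\ge2$, and $n\ge s$ integers with $d_{\max\text{-}iso}(q;[n,s])\ge1$; let $\pi:\mathbb{F}_{q^s}\to\mathbb{F}_q^n$ be an isometry whose image $\pi(\mathbb{F}_{q^s})$ is an $[n,s,d]_q$ code with $d=d_{\max\text{-}iso}(q;[n,s])$. Let $a,b\in\mathbb{F}_{q^s}$ with $b\neq0$ and let $N\ge2$. Let $r\ge0$ be such that $p^r$ divides $N+1$ but $p^{r+1}$ does not, let $N+1=p^r(m+1)$, let $\theta\in\overline{\mathbb{F}}_q$ be a primitive $2(m+1)$-th root of unity, and let $\mu^2=-1$. Let $S_1=\{-\mu/b+\theta^i+\theta^{-i}:1\le i\le m\}\cup\{\mu/b+\theta^i+\theta^{-i}:1\le i\le m\}$ and $S_2=\{-\mu/b+2,-\mu/b-2,\mu/b+2,\mu/b-2\}$. Assume: if $r=0$, then $a/b\notin S_1$; if $r\ge1$ and $m=0$, then $a/b\notin S_2$; if $r\ge1$ and $m\ge1$, then $a/b\notin S_1\cup S_2$. Then $\pi^{\otimes 2N}(\hat C_N(a,b))$ is an LCD code over $\mathbb{F}_q$ with parameters $[2nN,sN,D^*]_q$, where $D^*\ge dD$ and $D$ is the minimum distance of $\hat C_N(a,b)$.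
   Context: For a field $K$, $a,b\in K$ and $N\ge 2$, $\hat T_N(a,b)$ is the $N\times N$ symmetric tridiagonal Toeplitz matrix with diagonal entries $a$, first super- and sub-diagonal entries $b$, other entries $0$; $\hat C_N(a,b)$ is the $[2N,N]$ linear code over $K$ (here $K=\mathbb{F}_{q^s}$) with generator matrix $[I_N\mid\hat T_N(a,b)]$. A linear code $C$ is LCD if $C\cap C^\perp=\{0\}$ (Euclidean dual). An $\mathbb{F}_q$-linear map $\pi:\mathbb{F}_{q^s}\to\mathbb{F}_q^n$ ($n\ge s\ge2$) is an isometry if there is an $\mathbb{F}_q$-basis $(e_1,\dots,e_s)$ of $\mathbb{F}_{q^s}$ with trace-dual basis $(e'_1,\dots,e'_s)$ such that $\pi(e_i)\cdot\pi(e'_j)=\delta_{ij}$ for all $i,j$ (standard inner product on $\mathbb{F}_q^n$). $d_{\max\text{-}iso}(q;[n,s])$ is the largest $d$ such that some isometry $\pi:\mathbb{F}_{q^s}\to\mathbb{F}_q^n$ has image $\pi(\mathbb{F}_{q^s})$ (an $[n,s]_q$ code) of minimum distance $d$. The map $\pi^{\otimes 2N}:\mathbb{F}_{q^s}^{2N}\to\mathbb{F}_q^{2Nn}$ is $(c_1,\dots,c_{2N})\mapsto(\pi(c_1),\dots,\pi(c_{2N}))$. *)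

theory Defs
  imports "HOL-Computational_Algebra.Primes"
begin

(* Vectors over a field are lists; a code of length len is a set of lists of length len. *)

definition dotp :: "'a::comm_ring list \<Rightarrow> 'a list \<Rightarrow> 'a" where
  "dotp u v = sum_list (map2 (*) u v)"

definition hamming_dist :: "'a list \<Rightarrow> 'a list \<Rightarrow> nat" where
  "hamming_dist x y = card {i. i < length x \<and> x ! i \<noteq> y ! i}"

definition min_dist :: "'a list set \<Rightarrow> nat" where
  "min_dist C = Min {hamming_dist x y | x y. x \<in> C \<and> y \<in> C \<and> x \<noteq> y}"

definition dual_code :: "nat \<Rightarrow> 'a::field list set \<Rightarrow> 'a list set" where
  "dual_code len C = {y. length y = len \<and> (\<forall>x\<in>C. dotp x y = 0)}"

definition is_LCD :: "nat \<Rightarrow> 'a::field list set \<Rightarrow> bool" where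
  "is_LCD len C \<longleftrightarrow> C \<inter> dual_code len C = {replicate len 0}"

definition ring_hom_fun :: "('a::field \<Rightarrow> 'b::field) \<Rightarrow> bool" where
  "ring_hom_fun h \<longleftrightarrow> h 1 = 1 \<and> (\<forall>x y. h (x + y) = h x + h y) \<and> (\<forall>x y. h (x * y) = h x * h y)"

(* symmetric tridiagonal Toeplitz matrix \<hat>T_N(a,b), indices 0..N-1 *)
definition tridiag :: "'a::field \<Rightarrow> 'a \<Rightarrow> nat \<Rightarrow> nat \<Rightarrow> 'a" where
  "tridiag a b i j = (if i = j then a else if i = j + 1 \<or> j = i + 1 then b else 0)"

(* the [2N,N] code with generator matrix [I_N | \<hat>T_N(a,b)] *)
definition hatC :: "nat \<Rightarrow> 'a::field \<Rightarrow> 'a \<Rightarrow> 'a list set" where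
  "hatC N a b = {u @ map (\<lambda>j. \<Sum>i<N. u ! i * tridiag a b i j) [0..<N] | u. length u = N}"

(* F_q = 'a embedded into F_{q^s} = 'b via emb; trace Tr: F_{q^s} \<rightarrow> F_q (values in emb ` UNIV) *)
definition trace_ext :: "nat \<Rightarrow> nat \<Rightarrow> 'b::field \<Rightarrow> 'b" where
  "trace_ext q s x = (\<Sum>i<s. x ^ (q ^ i))"

definition is_Fq_basis :: "('a::field \<Rightarrow> 'b::field) \<Rightarrow> nat \<Rightarrow> (nat \<Rightarrow> 'b) \<Rightarrow> bool" where
  "is_Fq_basis emb s e \<longleftrightarrow>
     (\<forall>x. \<exists>!c. (\<forall>i\<ge>s. c i = 0) \<and> x = (\<Sum>i<s. emb (c i) * e i))"

definition Fq_linear :: "('a::field \<Rightarrow> 'b::field) \<Rightarrow> nat \<Rightarrow> ('b \<Rightarrow> 'a list) \<Rightarrow> bool" where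
  "Fq_linear emb n \<pi> \<longleftrightarrow>
     (\<forall>x. length (\<pi> x) = n) \<and>
     (\<forall>x y. \<pi> (x + y) = map2 (+) (\<pi> x) (\<pi> y)) \<and>
     (\<forall>c x. \<pi> (emb c * x) = map ((*) c) (\<pi> x))"

definition is_isometry :: "('a::field \<Rightarrow> 'b::field) \<Rightarrow> nat \<Rightarrow> nat \<Rightarrow> nat \<Rightarrow> ('b \<Rightarrow> 'a list) \<Rightarrow> bool" where
  "is_isometry emb q s n \<pi> \<longleftrightarrow> Fq_linear emb n \<pi> \<and>
     (\<exists>e e'. is_Fq_basis emb s e \<and> is_Fq_basis emb s e' \<and>
        (\<forall>i<s. \<forall>j<s. trace_ext q s (e i * e' j) = (if i = j then 1 else 0)) \<and>
        (\<forall>i<s. \<forall>j<s. dotp (\<pi> (e i)) (\<pi> (e' j)) = (if i = j then 1 else 0)))"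

definition d_max_iso :: "('a::field \<Rightarrow> 'b::field) \<Rightarrow> nat \<Rightarrow> nat \<Rightarrow> nat \<Rightarrow> nat" where
  "d_max_iso emb q s n = Max {d. \<exists>\<pi>. is_isometry emb q s n \<pi> \<and> min_dist (range \<pi>) = d}"

definition pi_tensor :: "('b \<Rightarrow> 'a list) \<Rightarrow> 'b list \<Rightarrow> 'a list" where
  "pi_tensor \<pi> c = concat (map \<pi> c)"

end

theory Submission
  imports Defs "HOL-Computational_Algebra.Polynomial" "HOL-Number_Theory.Residues"
begin



fun cheb :: "'c::comm_ring_1 \<Rightarrow> nat \<Rightarrow> 'c" where
  "cheb x 0 = 1"
| "cheb x (Suc 0) = x"
| "cheb x (Suc (Suc j)) = x * cheb x (Suc j) - cheb x j"

lemma cheb_cassini: "cheb x (Suc j) ^ 2 - cheb x (Suc (Suc j)) * cheb x j = 1"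
proof (induction j)
  case 0 then show ?case by (simp add: power2_eq_square algebra_simps)
next
  case (Suc j)
  then show ?case by (simp add: power2_eq_square algebra_simps)
qed

lemma cheb_neg: "cheb (-x) j = (-1) ^ j * cheb x j"
  by (induction x j rule: cheb.induct) (auto simp: algebra_simps)

lemma cheb_two: "cheb (2::'c::comm_ring_1) j = of_nat (j + 1)"
  by (induction "2::'c" j rule: cheb.induct) (auto simp: algebra_simps)

lemma cheb_poly_step:
  fixes x :: "'c::field"
  shows "[:1, -x, 1:] dvd [:0,1:] ^ (Suc (Suc j)) - [:- cheb x j, cheb x (Suc j):]"
proof (induction j)
  case 0
  show ?case by (simp add: power2_eq_square)
next
  case (Suc j)
  have eq: "[:0,1:] ^ (Suc (Suc (Suc j))) - [:- cheb x (Suc j), cheb x (Suc (Suc j)):]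
     = [:0,1:] * ([:0,1:] ^ (Suc (Suc j)) - [:- cheb x j, cheb x (Suc j):])
       + Polynomial.smult (cheb x (Suc j)) [:1, -x, 1:]"
    by (simp add: algebra_simps)
  show ?case unfolding eq
    by (rule dvd_add[OF dvd_mult[OF Suc.IH] Polynomial.dvd_smult[OF dvd_refl]])
qed

definition inv_mod :: "'c::field poly \<Rightarrow> 'c poly \<Rightarrow> bool" where
  "inv_mod f A \<longleftrightarrow> (\<exists>w. f dvd A * w - 1)"

lemma inv_mod_mult: "inv_mod f A \<Longrightarrow> inv_mod f B \<Longrightarrow> inv_mod f (A * B)"
proof -
  assume "inv_mod f A" "inv_mod f B"
  then obtain w1 w2 where w: "f dvd A * w1 - 1" "f dvd B * w2 - 1" by (auto simp: inv_mod_def)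
  have eq: "A * B * (w1 * w2) - 1 = (A * w1 - 1) * (B * w2) + (B * w2 - 1)" by (simp add: algebra_simps)
  have "f dvd A * B * (w1 * w2) - 1" unfolding eq by (rule dvd_add[OF dvd_mult2[OF w(1)] w(2)])
  thus ?thesis by (auto simp: inv_mod_def)
qed

lemma inv_mod_one: "inv_mod f 1"
  unfolding inv_mod_def by (rule exI[of _ 1]) simp

lemma inv_mod_prod: "(\<And>i. i \<in> A \<Longrightarrow> inv_mod f (g i)) \<Longrightarrow> inv_mod f (\<Prod>i\<in>A. g i)"
  by (induction A rule: infinite_finite_induct) (auto simp: inv_mod_one inv_mod_mult)

lemma inv_mod_power: "inv_mod f A \<Longrightarrow> inv_mod f (A ^ n)"
  by (induction n) (auto simp: inv_mod_one inv_mod_mult)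

lemma inv_mod_const: "c \<noteq> 0 \<Longrightarrow> inv_mod f [:c:]"
  unfolding inv_mod_def by (rule exI[of _ "[:inverse c:]"]) (simp add: one_pCons)

lemma inv_mod_dvd:
  fixes f :: "'c::field poly"
  shows "inv_mod f A \<Longrightarrow> f dvd A \<Longrightarrow> degree f = 0"
proof -
  assume "inv_mod f A" "f dvd A"
  then obtain w where "f dvd A * w - 1" by (auto simp: inv_mod_def)
  moreover have "f dvd A * w" using \<open>f dvd A\<close> by simp
  ultimately have "f dvd A * w - (A * w - 1)" by (rule dvd_diff[rotated])
  hence f1: "f dvd 1" by simp
  hence "f \<noteq> 0" by auto
  hence "degree f \<le> degree (1 :: 'c poly)" using f1 by (intro dvd_imp_degree) auto
  thus "degree f = 0" by simp
qed

lemma inv_mod_linear: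
  fixes f :: "'c::field poly"
  assumes "poly f a \<noteq> 0"
  shows "inv_mod f [:- a, 1:]"
proof -
  define S where "S = synthetic_div f a"
  define c where "c = poly f a"
  have c0: "c \<noteq> 0" using assms c_def by simp
  have fS: "f = [:-a, 1:] * S + [:c:]" unfolding S_def c_def by (rule synthetic_div_correct'[symmetric])
  have kc: "- inverse c * c = -1" using c0 by simp
  have m1: "[:-1:] = (-1 :: 'c poly)" by (simp add: one_pCons)
  have "Polynomial.smult (- inverse c) ([:-a, 1:] * S + [:c:]) = Polynomial.smult (- inverse c) ([:-a, 1:] * S) + [:- inverse c * c:]"
    by (simp only: smult_add_right smult_pCons smult_0_right)
  also have "\<dots> = [:- a, 1:] * Polynomial.smult (- inverse c) S - 1" by (simp only: kc m1 mult_smult_right) simp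
  finally have "[:- a, 1:] * Polynomial.smult (- inverse c) S - 1 = Polynomial.smult (- inverse c) ([:-a, 1:] * S + [:c:])" ..
  also have "\<dots> = Polynomial.smult (- inverse c) f" using fS by simp
  finally have e: "[:- a, 1:] * Polynomial.smult (- inverse c) S - 1 = Polynomial.smult (- inverse c) f" .
  show ?thesis unfolding inv_mod_def
    by (intro exI[of _ "Polynomial.smult (- inverse c) S"]) (simp only: e Polynomial.dvd_smult[OF dvd_refl])
qed

lemma prod_roots_dvd:
  fixes \<theta> :: "'c::field"
  assumes "\<theta> ^ M = 1" "\<forall>j. 0 < j \<and> j < M \<longrightarrow> \<theta> ^ j \<noteq> 1" "k \<le> M"
  shows "(\<Prod>i<k. [:- (\<theta> ^ i), 1:]) dvd [:0,1:] ^ M - 1"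
  using assms(3)
proof (induction k)
  case 0 then show ?case by simp
next
  case (Suc k)
  then obtain R where R: "[:0,1:] ^ M - 1 = (\<Prod>i<k. [:- (\<theta> ^ i), 1:]) * R" by auto
  have th0: "\<theta> \<noteq> 0" using assms(1) Suc.prems by (cases M) auto
  have "poly ([:0,1:] ^ M - 1) (\<theta> ^ k) = 0"
    using assms(1) by (simp add: poly_power power_mult[symmetric] mult.commute power_mult)
  hence "poly (\<Prod>i<k. [:- (\<theta> ^ i), 1:]) (\<theta> ^ k) * poly R (\<theta> ^ k) = 0"
    by (simp add: R)
  moreover have "poly (\<Prod>i<k. [:- (\<theta> ^ i), 1:]) (\<theta> ^ k) \<noteq> 0"
  proof -
    have "\<theta> ^ k - \<theta> ^ i \<noteq> 0" if "i < k" for i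
    proof
      assume "\<theta> ^ k - \<theta> ^ i = 0"
      hence "\<theta> ^ i * \<theta> ^ (k - i) = \<theta> ^ i * 1"
        using that by (simp add: power_add[symmetric])
      hence "\<theta> ^ (k - i) = 1" using th0 by simp
      thus False using assms(2) that Suc.prems by auto
    qed
    thus ?thesis by (simp add: poly_prod)
  qed
  ultimately have "poly R (\<theta> ^ k) = 0" by simp
  then obtain R' where R': "R = [:- (\<theta> ^ k), 1:] * R'" using poly_eq_0_iff_dvd by blast
  have "[:0,1:] ^ M - 1 = (\<Prod>i<k. [:- (\<theta> ^ i), 1:]) * ([:- (\<theta> ^ k), 1:] * R')"
    by (simp only: R R')
  also have "\<dots> = (\<Prod>i<Suc k. [:- (\<theta> ^ i), 1:]) * R'"
    by (simp only: prod.lessThan_Suc mult.assoc)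
  finally have "[:0,1:] ^ M - 1 = (\<Prod>i<Suc k. [:- (\<theta> ^ i), 1:]) * R'" .
  thus ?case by (metis dvd_triv_left)
qed

lemma cheb_root:
  fixes x \<theta> :: "'c::field"
  assumes charp: "of_nat p = (0::'c)" and p: "prime p" "odd p"
    and N: "N \<ge> 2" and mdef: "N + 1 = p ^ r * (m + 1)"
    and r2: "\<not> p ^ (r + 1) dvd N + 1"
    and theta1: "\<theta> ^ (2 * (m + 1)) = 1"
    and theta2: "\<forall>j. 0 < j \<and> j < 2 * (m + 1) \<longrightarrow> \<theta> ^ j \<noteq> 1"
    and root: "cheb x N = 0"
  shows "(\<exists>i. 1 \<le> i \<and> i \<le> m \<and> x = \<theta> ^ i + inverse \<theta> ^ i) \<or> (r \<ge> 1 \<and> (x = 2 \<or> x = -2))"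
proof -
  define M where "M = 2 * (m + 1)"
  define Y :: "'c poly" where "Y = [:0,1:]"
  define f where "f = [:1, -x, 1:]"
  define c where "c = cheb x (N - 1)"
  have CH: "CHAR('c) = p"
  proof -
    have "CHAR('c) dvd p" using charp of_nat_eq_0_iff_char_dvd by blast
    moreover have "CHAR('c) \<noteq> 1" using CHAR_not_1[where 'a='c] by simp
    ultimately show ?thesis using p(1) prime_nat_iff by blast
  qed
  have "f dvd Y ^ (Suc (Suc (N - 1))) - [:- c, cheb x (Suc (N - 1)):]"
    unfolding f_def Y_def c_def by (rule cheb_poly_step)
  hence f1: "f dvd Y ^ (N + 1) - [:- c:]"
    using N root by (simp add: Suc_diff_Suc)
  have e: "Suc (N - 2) = N - 1" "Suc (Suc (N - 2)) = N" "Suc (N - 1) = N" using N by auto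
  have "cheb x (N - 1) ^ 2 - cheb x N * cheb x (N - 2) = 1"
    using cheb_cassini[of x "N - 2"] by (simp only: e)
  hence c2: "c ^ 2 = 1" using root unfolding c_def by simp
  have "Y ^ (2 * (N + 1)) - 1 = (Y ^ (N + 1) - [:- c:]) * (Y ^ (N + 1) - [:c:])"
  proof -
    have cc: "c * c = 1" using c2 by (simp add: power2_eq_square)
    have m1: "[:-1:] = (-1 :: 'c poly)" by (simp add: one_pCons)
    show ?thesis using m1 by (simp add: cc algebra_simps power_mult mult.commute[of 2] power2_eq_square)
  qed
  hence f2: "f dvd Y ^ (2 * (N + 1)) - 1" using f1 by simp
  have "Y ^ (2 * (N + 1)) - 1 = (Y ^ M - 1) ^ (p ^ r)"
  proof -
    have pr: "odd (p ^ r)" using p by simp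
    have ex: "M * p ^ r = 2 * (N + 1)" using mdef M_def by simp
    have yp: "(Y ^ M) ^ (p ^ r) = Y ^ (2 * (N + 1))" by (simp only: power_mult[symmetric] ex)
    have m1: "(-1 :: 'c poly) ^ (p ^ r) = -1" using pr by simp
    have "(Y ^ M + (-1)) ^ (p ^ r) = (Y ^ M) ^ (p ^ r) + (-1) ^ (p ^ r)"
      by (rule freshmans_dream') (simp_all add: CH p)
    also have "\<dots> = Y ^ (2 * (N + 1)) - 1"
      by (simp only: yp m1) simp
    finally show ?thesis by simp
  qed
  with f2 have f3: "f dvd (Y ^ M - 1) ^ (p ^ r)" by simp
  have f0: "f \<noteq> 0" unfolding f_def by simp
  have fdeg: "degree f = 2" unfolding f_def by simp
  obtain R where R: "Y ^ M - 1 = (\<Prod>i<M. [:- (\<theta> ^ i), 1:]) * R"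
    using prod_roots_dvd[of \<theta> M M] theta1 theta2 unfolding M_def Y_def by auto
  have invR: "inv_mod f R"
  proof -
    have degY: "degree (Y ^ M - 1) = M"
    proof -
      have "Y ^ M - 1 = Polynomial.monom 1 M + (-1)" by (simp add: Y_def monom_altdef)
      also have "degree \<dots> = M" by (subst degree_add_eq_left) (auto simp: M_def degree_monom_eq)
      finally show ?thesis .
    qed
    have Q0: "(\<Prod>i<M. [:- (\<theta> ^ i), 1:]) \<noteq> (0 :: 'c poly)" by (simp add: prod_zero_iff)
    have degQ: "degree (\<Prod>i<M. [:- (\<theta> ^ i), 1:]) = M"
      by (subst degree_prod_eq_sum_degree) auto
    have R0: "R \<noteq> 0" using R degY M_def by auto
    have "degree R = 0" using degY degQ R degree_mult_eq[OF Q0 R0] by simp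
    then obtain r0 where "R = [:r0:]" by (rule degree_eq_zeroE)
    moreover have "r0 \<noteq> 0" using R0 calculation by simp
    ultimately show ?thesis using inv_mod_const by simp
  qed
  have "\<exists>j<M. poly f (\<theta> ^ j) = 0"
  proof (rule ccontr)
    assume "\<not> ?thesis"
    hence "inv_mod f [:- (\<theta> ^ j), 1:]" if "j < M" for j
      using that inv_mod_linear by blast
    hence "inv_mod f (\<Prod>i<M. [:- (\<theta> ^ i), 1:])" by (intro inv_mod_prod) auto
    hence "inv_mod f ((Y ^ M - 1) ^ (p ^ r))" using invR R by (simp add: inv_mod_mult inv_mod_power)
    from inv_mod_dvd[OF this f3] show False using fdeg by simp
  qed
  then obtain j where j: "j < M" "poly f (\<theta> ^ j) = 0" by blast
  note pf = j(2)
  have th0: "\<theta> \<noteq> 0" using theta1 by (auto simp: power_0_left)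
  have tj0: "\<theta> ^ j \<noteq> 0" using th0 by simp
  have xeq: "x = \<theta> ^ j + inverse \<theta> ^ j"
  proof -
    have "1 - x * \<theta> ^ j + \<theta> ^ j * \<theta> ^ j = 0" using pf by (simp add: f_def algebra_simps)
    thus ?thesis using tj0 by (simp add: power_inverse field_simps)
  qed
  have rpos: "r \<ge> 1" if "cheb x N = of_nat (N + 1) \<or> cheb x N = - of_nat (N + 1)"
  proof (rule ccontr)
    assume "\<not> r \<ge> 1"
    hence "r = 0" by simp
    moreover have "(of_nat (N + 1) :: 'c) = 0" using that root by (metis neg_0_equal_iff_equal)
    hence "p dvd N + 1" using CH of_nat_eq_0_iff_char_dvd by metis
    ultimately show False using r2 by simp
  qed
  show ?thesis
  proof (cases "j = 0")
    case True
    hence "x = 2" using xeq by simp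
    hence "cheb x N = of_nat (N + 1)" using cheb_two by simp
    thus ?thesis using rpos \<open>x = 2\<close> by simp
  next
    case j0: False
    show ?thesis
    proof (cases "j = m + 1")
      case True
      have "\<theta> ^ j * \<theta> ^ j = \<theta> ^ (2 * (m + 1))" by (simp only: power_add[symmetric] True mult_2)
      hence "\<theta> ^ j * \<theta> ^ j = 1" using theta1 by simp
      hence "(\<theta> ^ j - 1) * (\<theta> ^ j + 1) = 0" by (simp add: algebra_simps)
      moreover have "0 < j \<and> j < 2 * (m + 1)" using True by simp
      hence "\<theta> ^ j \<noteq> 1" using theta2 by blast
      ultimately have "\<theta> ^ j = -1" by (simp add: eq_neg_iff_add_eq_0)
      hence "inverse \<theta> ^ j = -1" by (metis power_inverse inverse_minus_eq inverse_1)
      hence "x = -2" using xeq \<open>\<theta> ^ j = -1\<close> by simp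
      hence "cheb x N = (-1) ^ N * of_nat (N + 1)" using cheb_neg[of "2::'c" N] cheb_two[where 'c='c] by simp
      hence "cheb x N = of_nat (N + 1) \<or> cheb x N = - of_nat (N + 1)"
        by (cases "even N") auto
      thus ?thesis using rpos \<open>x = -2\<close> by simp
    next
      case jm: False
      show ?thesis
      proof (cases "j \<le> m")
        case True
        thus ?thesis using xeq j0 by (intro disjI1 exI[of _ j]) auto
      next
        case False
        define i where "i = M - j"
        have i: "1 \<le> i" "i \<le> m" using False jm j(1) unfolding i_def M_def by auto
        have "\<theta> ^ j * \<theta> ^ i = 1" using theta1 j(1) unfolding i_def M_def
          by (simp add: power_add[symmetric])
        hence "inverse \<theta> ^ j = \<theta> ^ i" "\<theta> ^ j = inverse \<theta> ^ i"
          by (simp_all add: power_inverse inverse_unique mult.commute) (metis inverse_unique mult.commute)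
        hence "x = \<theta> ^ i + inverse \<theta> ^ i" using xeq by simp
        thus ?thesis using i by (intro disjI1 exI[of _ i]) auto
      qed
    qed
  qed
qed

lemma add3_solve: "(a::'a::ab_group_add) + b + c = 0 \<Longrightarrow> c = - a - b"
  by (simp add: algebra_simps eq_neg_iff_add_eq_0)

lemma tridiag_sym: "tridiag \<alpha> \<beta> i j = tridiag \<alpha> \<beta> j i"
  by (auto simp: tridiag_def)

lemma tridiag_sum:
  fixes w :: "nat \<Rightarrow> 'c::field"
  assumes "k < N"
  shows "(\<Sum>j<N. w j * tridiag \<alpha> \<beta> j k) = \<alpha> * w k + (if 0 < k then \<beta> * w (k - 1) else 0)
           + (if k + 1 < N then \<beta> * w (k + 1) else 0)"
proof -
  have "w j * tridiag \<alpha> \<beta> j k = (if j = k then \<alpha> * w j else 0) + (if j = k + 1 then \<beta> * w j else 0)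
        + (if 0 < k then (if j = k - 1 then \<beta> * w j else 0) else 0)" for j
    by (auto simp: tridiag_def)
  hence "(\<Sum>j<N. w j * tridiag \<alpha> \<beta> j k) = (\<Sum>j<N. (if j = k then \<alpha> * w j else 0)) + (\<Sum>j<N. (if j = k + 1 then \<beta> * w j else 0))
        + (\<Sum>j<N. (if 0 < k then (if j = k - 1 then \<beta> * w j else 0) else 0))"
    by (simp add: sum.distrib)
  also have "\<dots> = \<alpha> * w k + (if k + 1 < N then \<beta> * w (k + 1) else 0) + (if 0 < k then \<beta> * w (k - 1) else 0)"
    using assms by (simp add: sum.delta, linarith)
  finally show ?thesis by (simp add: algebra_simps)
qed

lemma tridiag_null:
  fixes w :: "nat \<Rightarrow> 'c::field"
  assumes \<beta>: "\<beta> \<noteq> 0" and N: "N \<ge> 2"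
    and eq: "\<forall>k<N. (\<Sum>j<N. w j * tridiag \<alpha> \<beta> j k) = 0"
    and nz: "\<exists>k<N. w k \<noteq> 0"
  shows "cheb (\<alpha> / \<beta>) N = 0"
proof -
  define z where "z = - \<alpha> / \<beta>"
  have eqk: "\<alpha> * w k + (if 0 < k then \<beta> * w (k - 1) else 0) + (if k + 1 < N then \<beta> * w (k + 1) else 0) = 0"
    if "k < N" for k using eq that tridiag_sum[OF that, of w \<alpha> \<beta>] by simp
  have rec: "w (k + 1) = z * w k - (if 0 < k then w (k - 1) else 0)" if "k + 1 < N" for k
  proof -
    have "\<alpha> * w k + (if 0 < k then \<beta> * w (k - 1) else 0) + \<beta> * w (k + 1) = 0"
      using eqk[of k] that by simp
    hence "\<beta> * w (k + 1) = - (\<alpha> * w k) - (if 0 < k then \<beta> * w (k - 1) else 0)"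
      by (rule add3_solve)
    hence "w (k + 1) = (- (\<alpha> * w k) - (if 0 < k then \<beta> * w (k - 1) else 0)) / \<beta>"
      using \<beta> by (simp add: eq_divide_eq mult.commute)
    thus ?thesis using \<beta> unfolding z_def by (cases "0 < k") (simp_all add: field_simps)
  qed
  have main: "j < N \<longrightarrow> w j = w 0 * cheb z j \<and> (Suc j < N \<longrightarrow> w (Suc j) = w 0 * cheb z (Suc j))" for j
  proof (induction j)
    case 0
    show ?case using rec[of 0] by (simp add: mult.commute)
  next
    case (Suc j)
    show ?case
    proof (intro impI conjI)
      assume "Suc j < N"
      thus "w (Suc j) = w 0 * cheb z (Suc j)" using Suc by simp
    next
      assume "Suc (Suc j) < N"
      hence "w (Suc (Suc j)) = z * w (Suc j) - w j" using rec[of "Suc j"] by simp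
      thus "w (Suc (Suc j)) = w 0 * cheb z (Suc (Suc j))" using Suc \<open>Suc (Suc j) < N\<close>
        by (simp add: algebra_simps)
    qed
  qed
  have w0: "w 0 \<noteq> 0"
  proof
    assume "w 0 = 0"
    hence "w k = 0" if "k < N" for k using main[of k] that by simp
    thus False using nz by blast
  qed
  have nn: "N - 1 < N" "0 < N - 1" "\<not> (N - 1 + 1 < N)" "N - 1 - 1 = N - 2" using N by auto
  have "\<alpha> * w (N - 1) + \<beta> * w (N - 2) = 0" using eqk[OF nn(1)] by (simp only: nn if_True if_False) simp
  hence "\<beta> * w (N - 2) = - (\<alpha> * w (N - 1))" by (simp add: eq_neg_iff_add_eq_0 add.commute)
  hence "w (N - 2) = - (\<alpha> * w (N - 1)) / \<beta>" using \<beta> by (metis nonzero_mult_div_cancel_left)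
  hence "z * w (N - 1) - w (N - 2) = 0" using \<beta> unfolding z_def by (simp add: field_simps)
  moreover have wN: "w (N - 1) = w 0 * cheb z (N - 1)" "w (N - 2) = w 0 * cheb z (N - 2)"
    using main[of "N - 1"] main[of "N - 2"] N by auto
  moreover have cN: "cheb z N = z * cheb z (N - 1) - cheb z (N - 2)"
  proof -
    obtain n where "N = Suc (Suc n)" using N by (metis add_2_eq_Suc le_Suc_ex)
    thus ?thesis by simp
  qed
  moreover have "w 0 * cheb z N = z * w (N - 1) - w (N - 2)"
    unfolding cN wN by (simp add: algebra_simps)
  ultimately have "w 0 * cheb z N = 0" by simp
  hence "cheb z N = 0" using w0 by simp
  hence "cheb (- z) N = 0" using cheb_neg[of z N] by simp
  thus ?thesis unfolding z_def by simp
qed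

lemma alg_main:
  fixes U :: "nat \<Rightarrow> 'c::field"
  assumes hyp: "\<forall>k<N. U k + (\<Sum>j<N. (\<Sum>i<N. U i * tridiag \<alpha> \<beta> i j) * tridiag \<alpha> \<beta> k j) = 0"
    and mu: "\<mu> ^ 2 = -1" and \<beta>: "\<beta> \<noteq> 0" and N: "N \<ge> 2"
    and nz: "\<exists>k<N. U k \<noteq> 0"
  shows "cheb ((\<alpha> + \<mu>) / \<beta>) N = 0 \<or> cheb ((\<alpha> - \<mu>) / \<beta>) N = 0"
proof -
  define V where "V j = (\<Sum>i<N. U i * tridiag \<alpha> \<beta> i j)" for j
  define w where "w j = V j - \<mu> * U j" for j
  have VT: "(\<Sum>j<N. V j * tridiag \<alpha> \<beta> j k) = - U k" if "k < N" for k
  proof -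
    have "(\<Sum>j<N. V j * tridiag \<alpha> \<beta> j k) = (\<Sum>j<N. V j * tridiag \<alpha> \<beta> k j)"
      by (rule sum.cong[OF refl]) (simp only: tridiag_sym[of \<alpha> \<beta> _ k])
    thus ?thesis using hyp that unfolding V_def by (simp add: eq_neg_iff_add_eq_0 add.commute)
  qed
  have UT: "(\<Sum>j<N. U j * tridiag \<alpha> \<beta> j k) = V k" for k
    unfolding V_def ..
  have tp: "tridiag (\<alpha> + c) \<beta> j k = tridiag \<alpha> \<beta> j k + (if j = k then c else 0)" for c j k
    by (simp add: tridiag_def)
  have sumc: "(\<Sum>j<N. f j * tridiag (\<alpha> + c) \<beta> j k) = (\<Sum>j<N. f j * tridiag \<alpha> \<beta> j k) + c * f k"
    if "k < N" for f c k
  proof -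
    have pt: "f j * tridiag (\<alpha> + c) \<beta> j k = f j * tridiag \<alpha> \<beta> j k + (if j = k then c * f j else 0)" for j
      by (simp add: tp distrib_left mult.commute)
    have "(\<Sum>j<N. f j * tridiag (\<alpha> + c) \<beta> j k) = (\<Sum>j<N. f j * tridiag \<alpha> \<beta> j k) + (\<Sum>j<N. if j = k then c * f j else 0)"
      by (simp only: pt sum.distrib)
    thus ?thesis using that by (simp add: sum.delta)
  qed
  have mu2: "\<mu> * \<mu> = -1" using mu by (simp add: power2_eq_square)
  show ?thesis
  proof (cases "\<exists>k<N. w k \<noteq> 0")
    case True
    have "\<forall>k<N. (\<Sum>j<N. w j * tridiag (\<alpha> + \<mu>) \<beta> j k) = 0"
    proof (intro allI impI)
      fix k assume k: "k < N"
      have "(\<Sum>j<N. w j * tridiag \<alpha> \<beta> j k) = (\<Sum>j<N. V j * tridiag \<alpha> \<beta> j k) - \<mu> * (\<Sum>j<N. U j * tridiag \<alpha> \<beta> j k)"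
        unfolding w_def by (simp add: algebra_simps sum_subtractf sum_distrib_left)
      also have "\<dots> = - U k - \<mu> * V k" by (simp only: VT[OF k] UT)
      finally have s1: "(\<Sum>j<N. w j * tridiag \<alpha> \<beta> j k) = - U k - \<mu> * V k" .
      have "(\<Sum>j<N. w j * tridiag (\<alpha> + \<mu>) \<beta> j k) = (\<Sum>j<N. w j * tridiag \<alpha> \<beta> j k) + \<mu> * w k"
        by (rule sumc[OF k])
      also have "\<dots> = - U k - \<mu> * V k + (\<mu> * V k - (\<mu> * \<mu>) * U k)"
        by (simp only: s1) (simp add: w_def algebra_simps)
      also have "\<dots> = 0" unfolding mu2 by simp
      finally show "(\<Sum>j<N. w j * tridiag (\<alpha> + \<mu>) \<beta> j k) = 0" .
    qed
    thus ?thesis using tridiag_null[OF \<beta> N _ True] by simp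
  next
    case False
    hence wz: "V k = \<mu> * U k" if "k < N" for k using that unfolding w_def by auto
    have "\<forall>k<N. (\<Sum>j<N. U j * tridiag (\<alpha> + (- \<mu>)) \<beta> j k) = 0"
    proof (intro allI impI)
      fix k assume k: "k < N"
      show "(\<Sum>j<N. U j * tridiag (\<alpha> + (- \<mu>)) \<beta> j k) = 0"
        by (simp only: sumc[OF k] UT wz[OF k]) simp
    qed
    from tridiag_null[OF \<beta> N this nz] show ?thesis by simp
  qed
qed




lemma S_contra:
  fixes A B \<theta> \<mu> :: "'c::field"
  assumes charp: "of_nat p = (0::'c)" and p: "prime p" "odd p"
    and N: "N \<ge> 2" and mdef: "N + 1 = p ^ r * (m + 1)"
    and r2: "\<not> p ^ (r + 1) dvd N + 1"
    and theta1: "\<theta> ^ (2 * (m + 1)) = 1"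
    and theta2: "\<forall>j. 0 < j \<and> j < 2 * (m + 1) \<longrightarrow> \<theta> ^ j \<noteq> 1"
    and B: "B \<noteq> 0"
    and S: "let S1 = {- \<mu> / B + \<theta> ^ i + inverse \<theta> ^ i | i. 1 \<le> i \<and> i \<le> m}
                    \<union> {\<mu> / B + \<theta> ^ i + inverse \<theta> ^ i | i. 1 \<le> i \<and> i \<le> m};
                S2 = {- \<mu> / B + 2, - \<mu> / B - 2, \<mu> / B + 2, \<mu> / B - 2};
                ab = A / B
            in (r = 0 \<longrightarrow> ab \<notin> S1) \<and>
               (r \<ge> 1 \<and> m = 0 \<longrightarrow> ab \<notin> S2) \<and>
               (r \<ge> 1 \<and> m \<ge> 1 \<longrightarrow> ab \<notin> S1 \<union> S2)"
    and hx: "cheb ((A + \<mu>) / B) N = 0 \<or> cheb ((A - \<mu>) / B) N = 0"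
  shows False
proof -
  define S1 where "S1 = {- \<mu> / B + \<theta> ^ i + inverse \<theta> ^ i | i. 1 \<le> i \<and> i \<le> m}
                    \<union> {\<mu> / B + \<theta> ^ i + inverse \<theta> ^ i | i. 1 \<le> i \<and> i \<le> m}"
  define S2 where "S2 = {- \<mu> / B + 2, - \<mu> / B - 2, \<mu> / B + 2, \<mu> / B - 2}"
  have hS: "(r = 0 \<longrightarrow> A / B \<notin> S1) \<and> (r \<ge> 1 \<and> m = 0 \<longrightarrow> A / B \<notin> S2) \<and>
               (r \<ge> 1 \<and> m \<ge> 1 \<longrightarrow> A / B \<notin> S1 \<union> S2)"
    using S unfolding Let_def S1_def S2_def .
  have key: "A / B \<notin> S1" if "\<exists>i. 1 \<le> i \<and> i \<le> m \<and> A / B \<in> S1"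
    using hS that by (cases "r = 0") auto
  have key2: "A / B \<notin> S2" if "r \<ge> 1"
    using hS that by (cases "m = 0") auto
  have cr: "(\<exists>i. 1 \<le> i \<and> i \<le> m \<and> x = \<theta> ^ i + inverse \<theta> ^ i) \<or> (r \<ge> 1 \<and> (x = 2 \<or> x = -2))"
    if "cheb x N = 0" for x
    using cheb_root[OF charp p N mdef r2 theta1 theta2 that] .
  show False
  proof (cases "cheb ((A + \<mu>) / B) N = 0")
    case True
    have ab: "A / B = - \<mu> / B + (A + \<mu>) / B" using B by (simp add: field_simps)
    from cr[OF True] show False
    proof
      assume "\<exists>i. 1 \<le> i \<and> i \<le> m \<and> (A + \<mu>) / B = \<theta> ^ i + inverse \<theta> ^ i"
      then obtain i where i: "1 \<le> i" "i \<le> m" "(A + \<mu>) / B = \<theta> ^ i + inverse \<theta> ^ i" by blast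
      hence "A / B = - \<mu> / B + \<theta> ^ i + inverse \<theta> ^ i" using ab by (simp add: add.assoc)
      hence "A / B \<in> S1" using i unfolding S1_def by blast
      thus False using key i by blast
    next
      assume "r \<ge> 1 \<and> ((A + \<mu>) / B = 2 \<or> (A + \<mu>) / B = -2)"
      hence "A / B \<in> S2" "r \<ge> 1" using ab unfolding S2_def by auto
      thus False using key2 by blast
    qed
  next
    case False
    hence F: "cheb ((A - \<mu>) / B) N = 0" using hx by blast
    have ab: "A / B = \<mu> / B + (A - \<mu>) / B" using B by (simp add: field_simps)
    from cr[OF F] show False
    proof
      assume "\<exists>i. 1 \<le> i \<and> i \<le> m \<and> (A - \<mu>) / B = \<theta> ^ i + inverse \<theta> ^ i"
      then obtain i where i: "1 \<le> i" "i \<le> m" "(A - \<mu>) / B = \<theta> ^ i + inverse \<theta> ^ i" by blast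
      hence "A / B = \<mu> / B + \<theta> ^ i + inverse \<theta> ^ i" using ab by (simp add: add.assoc)
      hence "A / B \<in> S1" using i unfolding S1_def by blast
      thus False using key i by blast
    next
      assume "r \<ge> 1 \<and> ((A - \<mu>) / B = 2 \<or> (A - \<mu>) / B = -2)"
      hence "A / B \<in> S2" "r \<ge> 1" using ab unfolding S2_def by auto
      thus False using key2 by blast
    qed
  qed
qed




lemma hom0: "ring_hom_fun h \<Longrightarrow> h 0 = 0"
  unfolding ring_hom_fun_def by (metis add_cancel_right_right add_0)

lemma hom_add: "ring_hom_fun h \<Longrightarrow> h (x + y) = h x + h y"
  unfolding ring_hom_fun_def by blast

lemma hom_mult: "ring_hom_fun h \<Longrightarrow> h (x * y) = h x * h y"
  unfolding ring_hom_fun_def by blast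

lemma hom_one: "ring_hom_fun h \<Longrightarrow> h 1 = 1"
  unfolding ring_hom_fun_def by blast

lemma hom_uminus: "ring_hom_fun h \<Longrightarrow> h (- x) = - h x"
  using hom_add[of h x "-x"] hom0[of h] by (simp add: eq_neg_iff_add_eq_0 add.commute)

lemma hom_diff: "ring_hom_fun h \<Longrightarrow> h (x - y) = h x - h y"
  using hom_add[of h x "-y"] hom_uminus[of h y] by simp

lemma hom_sum: "ring_hom_fun h \<Longrightarrow> h (\<Sum>i\<in>A. f i) = (\<Sum>i\<in>A. h (f i))"
  by (induction A rule: infinite_finite_induct) (auto simp: hom0 hom_add)

lemma hom_nonzero:
  fixes h :: "'a::field \<Rightarrow> 'b::field"
  shows "ring_hom_fun h \<Longrightarrow> x \<noteq> 0 \<Longrightarrow> h x \<noteq> 0"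
  using hom_mult[of h x "inverse x"] hom_one[of h] by auto

lemma hom_inj:
  fixes h :: "'a::field \<Rightarrow> 'b::field"
  shows "ring_hom_fun h \<Longrightarrow> h x = h y \<Longrightarrow> x = y"
  using hom_nonzero[of h "x - y"] hom_diff[of h x y] by auto

lemma hom_of_nat: "ring_hom_fun h \<Longrightarrow> h (of_nat n) = of_nat n"
  by (induction n) (auto simp: hom0 hom_add hom_one)

lemma hom_divide:
  fixes h :: "'a::field \<Rightarrow> 'b::field"
  shows "ring_hom_fun h \<Longrightarrow> h (x / y) = h x / h y"
proof (cases "y = 0")
  case True
  assume "ring_hom_fun h" thus ?thesis using True by (simp add: hom0)
next
  case False
  assume h: "ring_hom_fun h"
  have "h (x / y) * h y = h x" using False hom_mult[OF h, of "x / y" y] by simp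
  thus ?thesis using hom_nonzero[OF h False] by (simp add: eq_divide_eq)
qed

lemma hom_tridiag: "ring_hom_fun h \<Longrightarrow> h (tridiag a b i j) = tridiag (h a) (h b) i j"
  by (simp add: tridiag_def hom0)

lemma finite_field_power_card:
  fixes x :: "'a :: {field, finite}"
  shows "x ^ card (UNIV :: 'a set) = x"
proof (cases "x = 0")
  case False
  have "x * (\<Prod>y\<in>UNIV-{0}. x * y) = x * x ^ (card (UNIV :: 'a set) - 1) * \<Prod>(UNIV-{0})"
    by (simp add: prod.distrib mult_ac)
  also have "x * x ^ (card (UNIV :: 'a set) - 1) = x ^ Suc (card (UNIV :: 'a set) - 1)"
    by (subst power_Suc) auto
  also have "Suc (card (UNIV :: 'a set) - 1) = card (UNIV :: 'a set)"
    using finite_UNIV_card_ge_0[where ?'a = 'a] by simp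
  also have "(\<Prod>y\<in>UNIV-{0}. x * y) = (\<Prod>y\<in>UNIV-{0}. y)"
    by (rule prod.reindex_bij_witness[of _ "\<lambda>y. y / x" "\<lambda>y. x * y"]) (use False in auto)
  finally show ?thesis
    by simp
qed (use finite_UNIV_card_ge_0[where ?'a = 'a] in auto)

lemma finite_field_power_card_pow:
  fixes x :: "'a :: {field, finite}"
  shows "x ^ (card (UNIV :: 'a set) ^ i) = x"
  by (induction i) (simp_all add: finite_field_power_card power_mult)

lemma CHAR_finite_field:
  assumes "card (UNIV :: 'a :: {field, finite} set) = p ^ k" "prime p" "k \<ge> 1"
  shows "CHAR('a) = p"
proof -
  have "CHAR('a) > 0" by (rule finite_imp_CHAR_pos) simp
  hence pr: "prime CHAR('a)" by (rule prime_CHAR_semidom)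
  have "CHAR('a) dvd p ^ k" using CHAR_dvd_CARD[where 'a='a] assms(1) by simp
  hence "CHAR('a) dvd p" using pr prime_dvd_power by blast
  thus ?thesis using pr assms(2) primes_dvd_imp_eq by blast
qed




lemma dotp_Nil1 [simp]: "dotp [] v = 0" by (simp add: dotp_def)
lemma dotp_Nil2 [simp]: "dotp u [] = 0" by (simp add: dotp_def)
lemma dotp_Cons [simp]: "dotp (a # u) (b # v) = a * b + dotp u v" by (simp add: dotp_def)

lemma dotp_append: "length A = length C \<Longrightarrow> dotp (A @ B) (C @ D) = dotp A C + dotp B D"
  by (induction A C rule: list_induct2) (auto simp: algebra_simps)

lemma dotp_add_left: "length u = length v \<Longrightarrow> length v = length w \<Longrightarrow>
    dotp (map2 (+) u v) w = dotp u w + dotp v w"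
  by (induction u v w rule: list_induct3) (auto simp: algebra_simps)

lemma dotp_add_right: "length u = length v \<Longrightarrow> length v = length w \<Longrightarrow>
    dotp w (map2 (+) u v) = dotp w u + dotp w v"
  by (induction u v w rule: list_induct3) (auto simp: algebra_simps)

lemma dotp_smult_left: "dotp (map ((*) c) u) w = c * dotp u w"
proof (induction u arbitrary: w)
  case (Cons a u) thus ?case by (cases w) (auto simp: algebra_simps)
qed simp

lemma dotp_smult_right: "dotp w (map ((*) c) u) = c * dotp w u"
proof (induction u arbitrary: w)
  case (Cons a u) thus ?case by (cases w) (auto simp: algebra_simps)
qed simp

lemma dotp_zero_right: "dotp u (replicate m 0) = 0"
proof (induction u arbitrary: m)
  case (Cons a u) thus ?case by (cases m) auto
qed simp

lemma dotp_nth: "length u = length v \<Longrightarrow> dotp u v = (\<Sum>i<length u. u ! i * v ! i)"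
proof (induction u v rule: list_induct2)
  case (Cons x xs y ys)
  thus ?case by (simp add: sum.lessThan_Suc_shift del: sum.lessThan_Suc)
qed simp

lemma hom_power: "ring_hom_fun h \<Longrightarrow> h (x ^ n) = h x ^ n"
  by (induction n) (auto simp: hom_one hom_mult)

locale fq_setup =
  fixes emb :: "'a::{field,finite} \<Rightarrow> 'b::{field,finite}" and p k q :: nat
  assumes emb: "ring_hom_fun emb"
    and prime: "prime p" and qdef: "q = p ^ k"
    and cardA: "card (UNIV :: 'a set) = q"
    and charB: "CHAR('b) = p"
begin

lemma trace_add: "trace_ext q s ((x::'b) + y) = trace_ext q s x + trace_ext q s y"
proof -
  have "(x + y) ^ (q ^ i) = x ^ (q ^ i) + y ^ (q ^ i)" for i
    by (rule freshmans_dream'[where n = "k * i"]) (simp_all add: charB prime qdef power_mult)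
  thus ?thesis unfolding trace_ext_def by (simp add: sum.distrib)
qed

lemma trace_scal: "trace_ext q s (emb c * (x::'b)) = emb c * trace_ext q s x"
proof -
  have "(emb c * x) ^ (q ^ i) = emb c * x ^ (q ^ i)" for i
  proof -
    have "emb c ^ (q ^ i) = emb (c ^ (q ^ i))" using hom_power[OF emb] by simp
    also have "c ^ (q ^ i) = c" using finite_field_power_card_pow[of c i] cardA by simp
    finally show ?thesis by (simp add: power_mult_distrib)
  qed
  thus ?thesis unfolding trace_ext_def by (simp add: sum_distrib_left)
qed

lemma trace_zero: "trace_ext q s (0::'b) = 0"
  using trace_add[of s 0 0] by (metis add.right_neutral add_left_cancel)

lemma additive_sum:
  fixes F :: "'b \<Rightarrow> 'b"
  assumes "\<And>x y. F (x + y) = F x + F y"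
  shows "F (\<Sum>i\<in>A. f i) = (\<Sum>i\<in>A. F (f i))"
proof -
  have F0: "F 0 = 0" using assms[of 0 0] by (metis add.right_neutral add_left_cancel)
  show ?thesis by (induction A rule: infinite_finite_induct) (auto simp: F0 assms)
qed

lemma agree:
  fixes F G :: "'b \<Rightarrow> 'b"
  assumes Fa: "\<And>x y. F (x + y) = F x + F y" and Fs: "\<And>c x. F (emb c * x) = emb c * F x"
    and Ga: "\<And>x y. G (x + y) = G x + G y" and Gs: "\<And>c x. G (emb c * x) = emb c * G x"
    and basis: "is_Fq_basis emb s e" and eq: "\<forall>i<s. F (e i) = G (e i)"
  shows "F x = G x"
proof -
  obtain c where c: "x = (\<Sum>i<s. emb (c i) * e i)" using basis unfolding is_Fq_basis_def by blast
  have "F x = (\<Sum>i<s. emb (c i) * F (e i))" unfolding c additive_sum[of F, OF Fa] Fs ..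
  also have "\<dots> = (\<Sum>i<s. emb (c i) * G (e i))" using eq by simp
  also have "\<dots> = G x" unfolding c additive_sum[of G, OF Ga] Gs ..
  finally show ?thesis .
qed

lemma iso_dot:
  assumes iso: "is_isometry emb q s n \<pi>"
  shows "emb (dotp (\<pi> x) (\<pi> y)) = trace_ext q s (x * y)"
proof -
  have lin: "Fq_linear emb n \<pi>" using iso unfolding is_isometry_def by blast
  have len: "length (\<pi> z) = n" for z using lin unfolding Fq_linear_def by blast
  have padd: "\<pi> (z + w) = map2 (+) (\<pi> z) (\<pi> w)" for z w using lin unfolding Fq_linear_def by blast
  have psc: "\<pi> (emb c * z) = map ((*) c) (\<pi> z)" for c z using lin unfolding Fq_linear_def by blast
  obtain e e' where b: "is_Fq_basis emb s e" "is_Fq_basis emb s e'"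
    and tr: "\<forall>i<s. \<forall>j<s. trace_ext q s (e i * e' j) = (if i = j then 1 else 0)"
    and dt: "\<forall>i<s. \<forall>j<s. dotp (\<pi> (e i)) (\<pi> (e' j)) = (if i = j then 1 else 0)"
    using iso unfolding is_isometry_def by blast
  have step1: "emb (dotp (\<pi> z) (\<pi> (e' j))) = trace_ext q s (z * e' j)" if j: "j < s" for z j
  proof (rule agree[where F = "\<lambda>z. emb (dotp (\<pi> z) (\<pi> (e' j)))" and G = "\<lambda>z. trace_ext q s (z * e' j)"])
    show "emb (dotp (\<pi> (x + y)) (\<pi> (e' j))) = emb (dotp (\<pi> x) (\<pi> (e' j))) + emb (dotp (\<pi> y) (\<pi> (e' j)))" for x y
      by (simp add: padd dotp_add_left len hom_add[OF emb])
    show "emb (dotp (\<pi> (emb c * x)) (\<pi> (e' j))) = emb c * emb (dotp (\<pi> x) (\<pi> (e' j)))" for c x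
      by (simp add: psc dotp_smult_left hom_mult[OF emb])
    show "trace_ext q s ((x + y) * e' j) = trace_ext q s (x * e' j) + trace_ext q s (y * e' j)" for x y
      by (simp add: distrib_right trace_add)
    show "trace_ext q s (emb c * x * e' j) = emb c * trace_ext q s (x * e' j)" for c x
      by (simp add: mult.assoc trace_scal)
    show "is_Fq_basis emb s e" by (rule b)
    show "\<forall>i<s. emb (dotp (\<pi> (e i)) (\<pi> (e' j))) = trace_ext q s (e i * e' j)"
      using tr dt j by (simp add: hom_one[OF emb] hom0[OF emb])
  qed
  show ?thesis
  proof (rule agree[where F = "\<lambda>y. emb (dotp (\<pi> x) (\<pi> y))" and G = "\<lambda>y. trace_ext q s (x * y)"])
    show "emb (dotp (\<pi> x) (\<pi> (y + z))) = emb (dotp (\<pi> x) (\<pi> y)) + emb (dotp (\<pi> x) (\<pi> z))" for y z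
      by (simp add: padd dotp_add_right len hom_add[OF emb])
    show "emb (dotp (\<pi> x) (\<pi> (emb c * y))) = emb c * emb (dotp (\<pi> x) (\<pi> y))" for c y
      by (simp add: psc dotp_smult_right hom_mult[OF emb])
    show "trace_ext q s (x * (y + z)) = trace_ext q s (x * y) + trace_ext q s (x * z)" for y z
      by (simp add: distrib_left trace_add)
    show "trace_ext q s (x * (emb c * y)) = emb c * trace_ext q s (x * y)" for c y
      by (simp only: mult.left_commute[of x "emb c" y] trace_scal)
    show "is_Fq_basis emb s e'" by (rule b)
    show "\<forall>j<s. emb (dotp (\<pi> x) (\<pi> (e' j))) = trace_ext q s (x * e' j)"
      using step1 by blast
  qed
qed

end




lemma pi_tensor_Nil [simp]: "pi_tensor \<pi> [] = []" by (simp add: pi_tensor_def)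
lemma pi_tensor_Cons [simp]: "pi_tensor \<pi> (x # c) = \<pi> x @ pi_tensor \<pi> c" by (simp add: pi_tensor_def)

lemma length_pi_tensor: "(\<And>x. length (\<pi> x) = n) \<Longrightarrow> length (pi_tensor \<pi> c) = n * length c"
  by (induction c) auto

lemma pi_tensor_inj:
  assumes len: "\<And>x. length (\<pi> x) = n" and inj: "inj \<pi>"
  shows "length c = length d \<Longrightarrow> pi_tensor \<pi> c = pi_tensor \<pi> d \<Longrightarrow> c = d"
proof (induction c d rule: list_induct2)
  case (Cons x xs y ys)
  hence "\<pi> x = \<pi> y \<and> pi_tensor \<pi> xs = pi_tensor \<pi> ys"
    using len by (simp add: append_eq_append_conv)
  thus ?case using Cons inj by (auto dest: injD)
qed simp

lemma hamming_sum: "hamming_dist x y = (\<Sum>i<length x. if x ! i \<noteq> y ! i then 1 else 0)"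
proof -
  have "{i. i < length x \<and> x ! i \<noteq> y ! i} = {i\<in>{..<length x}. x ! i \<noteq> y ! i}" by auto
  hence "hamming_dist x y = (\<Sum>i\<in>{i\<in>{..<length x}. x ! i \<noteq> y ! i}. 1)"
    unfolding hamming_dist_def by simp
  also have "\<dots> = (\<Sum>i<length x. if x ! i \<noteq> y ! i then 1 else 0)"
    by (rule sum.inter_filter) simp
  finally show ?thesis .
qed

lemma hamming_Nil [simp]: "hamming_dist [] y = 0"
  by (simp add: hamming_dist_def)

lemma hamming_Cons: "hamming_dist (x # A) (y # C) = (if x = y then 0 else 1) + hamming_dist A C"
  unfolding hamming_sum by (simp add: sum.lessThan_Suc_shift del: sum.lessThan_Suc)

lemma hamming_append: "length A = length C \<Longrightarrow> hamming_dist (A @ B) (C @ D) = hamming_dist A C + hamming_dist B D"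
  by (induction A C rule: list_induct2) (auto simp: hamming_Cons)

lemma hamming_pi_tensor:
  assumes len: "\<And>x. length (\<pi> x) = n"
    and dd: "\<And>x y. x \<noteq> y \<Longrightarrow> dd \<le> hamming_dist (\<pi> x) (\<pi> y)"
  shows "length c = length d \<Longrightarrow> dd * hamming_dist c d \<le> hamming_dist (pi_tensor \<pi> c) (pi_tensor \<pi> d)"
proof (induction c d rule: list_induct2)
  case (Cons x xs y ys)
  have "hamming_dist (pi_tensor \<pi> (x # xs)) (pi_tensor \<pi> (y # ys))
      = hamming_dist (\<pi> x) (\<pi> y) + hamming_dist (pi_tensor \<pi> xs) (pi_tensor \<pi> ys)"
    using len by (simp add: hamming_append)
  moreover have "dd * (if x = y then 0 else 1) \<le> hamming_dist (\<pi> x) (\<pi> y)" using dd by auto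
  ultimately show ?case using Cons by (simp add: hamming_Cons distrib_left)
qed simp

definition enc :: "nat \<Rightarrow> 'b::field \<Rightarrow> 'b \<Rightarrow> 'b list \<Rightarrow> 'b list" where
  "enc N a b u = u @ map (\<lambda>j. \<Sum>i<N. u ! i * tridiag a b i j) [0..<N]"

lemma hatC_enc: "hatC N a b = enc N a b ` {u. length u = N}"
  unfolding hatC_def enc_def by auto

lemma length_enc: "length u = N \<Longrightarrow> length (enc N a b u) = 2 * N"
  unfolding enc_def by simp

lemma enc_inj: "length u = N \<Longrightarrow> length v = N \<Longrightarrow> enc N a b u = enc N a b v \<Longrightarrow> u = v"
  unfolding enc_def by simp

lemma card_hatC: "card (hatC N a (b :: 'b :: {field, finite})) = card (UNIV :: 'b set) ^ N"
proof -
  have "card (hatC N a b) = card {u :: 'b list. length u = N}"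
    unfolding hatC_enc by (rule card_image) (auto intro: inj_onI enc_inj)
  also have "{u :: 'b list. length u = N} = {xs. set xs \<subseteq> UNIV \<and> length xs = N}" by simp
  also have "card \<dots> = card (UNIV :: 'b set) ^ N" by (rule card_lists_length_eq) simp
  finally show ?thesis .
qed

lemma finite_hatC: "finite (hatC N a (b :: 'b :: {field, finite}))"
proof -
  have "finite {xs :: 'b list. set xs \<subseteq> UNIV \<and> length xs = N}" by (rule finite_lists_length_eq) simp
  thus ?thesis unfolding hatC_enc by simp
qed

lemma enc_scale: "length u = N \<Longrightarrow> map ((*) l) (enc N a b u) = enc N a b (map ((*) l) u)"
  unfolding enc_def by (simp add: sum_distrib_left mult.assoc)

lemma dotp_enc: "length u = N \<Longrightarrow> length v = N \<Longrightarrow>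
   dotp (enc N a b u) (enc N a b v) = dotp u v +
     (\<Sum>j<N. (\<Sum>i<N. u ! i * tridiag a b i j) * (\<Sum>i<N. v ! i * tridiag a b i j))"
  unfolding enc_def by (subst dotp_append) (simp_all add: dotp_nth)




context fq_setup
begin

lemma pt_dot:
  assumes iso: "is_isometry emb q s n \<pi>" and len: "\<And>x. length (\<pi> x) = n"
  shows "length c = length d \<Longrightarrow> emb (dotp (pi_tensor \<pi> c) (pi_tensor \<pi> d)) = trace_ext q s (dotp c d)"
proof (induction c d rule: list_induct2)
  case Nil
  show ?case by (simp add: hom0[OF emb] trace_zero)
next
  case (Cons x xs y ys)
  have "emb (dotp (pi_tensor \<pi> (x # xs)) (pi_tensor \<pi> (y # ys)))
        = emb (dotp (\<pi> x) (\<pi> y)) + emb (dotp (pi_tensor \<pi> xs) (pi_tensor \<pi> ys))"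
    using len by (simp add: dotp_append hom_add[OF emb])
  also have "\<dots> = trace_ext q s (x * y) + trace_ext q s (dotp xs ys)"
    using Cons iso_dot[OF iso] by simp
  also have "\<dots> = trace_ext q s (dotp (x # xs) (y # ys))" by (simp add: trace_add)
  finally show ?case .
qed

end

lemma pi_zero:
  assumes "Fq_linear emb n \<pi>" "ring_hom_fun emb"
  shows "\<pi> 0 = replicate n 0"
proof -
  have "\<pi> (emb 0 * 0) = map ((*) 0) (\<pi> 0)" using assms(1) unfolding Fq_linear_def by blast
  moreover have "length (\<pi> 0) = n" using assms(1) unfolding Fq_linear_def by blast
  moreover have "map ((*) (0::'a)) xs = replicate (length xs) 0" for xs :: "'a list"
    by (induction xs) auto
  ultimately show ?thesis using hom0[OF assms(2)] by simp
qed

lemma pt_replicate: "\<pi> z = replicate n 0 \<Longrightarrow> pi_tensor \<pi> (replicate m z) = replicate (n * m) 0"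
  by (induction m) (auto simp: replicate_add[symmetric] add.commute)

lemma enc_zero: "enc N a b (replicate N 0) = replicate (2 * N) 0"
  unfolding enc_def by (simp add: map_replicate_const mult_2 replicate_add)



theorem theorem3p3:
  fixes emb :: "'a::{field,finite} \<Rightarrow> 'b::{field,finite}"
    and h :: "'b \<Rightarrow> 'c::field"
    and p k q s n N r m :: nat
    and \<pi> :: "'b \<Rightarrow> 'a list"
    and a b :: 'b
    and \<theta> \<mu> :: 'c
  assumes p: "prime p" "odd p" and qdef: "q = p ^ k" "k \<ge> 1"
    and cardA: "card (UNIV :: 'a set) = q" and cardB: "card (UNIV :: 'b set) = q ^ s"
    and emb: "ring_hom_fun emb"
    and h: "ring_hom_fun h"
    and s: "s \<ge> 2" and n: "n \<ge> s"
    and dpos: "d_max_iso emb q s n \<ge> 1"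
    and iso: "is_isometry emb q s n \<pi>"
    and dmax: "min_dist (range \<pi>) = d_max_iso emb q s n"
    and b: "b \<noteq> 0" and N: "N \<ge> 2"
    and r1: "p ^ r dvd N + 1" and r2: "\<not> p ^ (r + 1) dvd N + 1"
    and mdef: "N + 1 = p ^ r * (m + 1)"
    and theta1: "\<theta> ^ (2 * (m + 1)) = 1"
    and theta2: "\<forall>j. 0 < j \<and> j < 2 * (m + 1) \<longrightarrow> \<theta> ^ j \<noteq> 1"
    and mu: "\<mu> ^ 2 = -1"
    and S: "let S1 = {- \<mu> / h b + \<theta> ^ i + inverse \<theta> ^ i | i. 1 \<le> i \<and> i \<le> m}
                    \<union> {\<mu> / h b + \<theta> ^ i + inverse \<theta> ^ i | i. 1 \<le> i \<and> i \<le> m};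
                S2 = {- \<mu> / h b + 2, - \<mu> / h b - 2, \<mu> / h b + 2, \<mu> / h b - 2};
                ab = h a / h b
            in (r = 0 \<longrightarrow> ab \<notin> S1) \<and>
               (r \<ge> 1 \<and> m = 0 \<longrightarrow> ab \<notin> S2) \<and>
               (r \<ge> 1 \<and> m \<ge> 1 \<longrightarrow> ab \<notin> S1 \<union> S2)"
  shows "let C = pi_tensor \<pi> ` hatC N a b
         in is_LCD (2 * n * N) C \<and>
            (\<forall>c\<in>C. length c = 2 * n * N) \<and>
            card C = q ^ (s * N) \<and>
            min_dist C \<ge> d_max_iso emb q s n * min_dist (hatC N a b)"
proof -
  have hb: "h b \<noteq> 0" using hom_nonzero[OF h b] .
  have ks: "k * s \<ge> 1" using qdef(2) s by simp
  have CB: "CHAR('b) = p"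
    using CHAR_finite_field[of p "k * s"] cardB qdef p(1) ks by (simp add: power_mult)
  interpret fq: fq_setup emb p k q
    by unfold_locales (use emb p cardA CB qdef in auto)
  have lin: "Fq_linear emb n \<pi>" using iso unfolding is_isometry_def by blast
  have len: "\<And>x. length (\<pi> x) = n" using lin unfolding Fq_linear_def by blast
  obtain e e' :: "nat \<Rightarrow> 'b" where tr: "\<forall>i<s. \<forall>j<s. trace_ext q s (e i * e' j) = (if i = j then 1 else 0)"
    using iso unfolding is_isometry_def by blast
  have tr0: "trace_ext q s (e 0 * e' 0) = 1" using tr s by simp
  have nondeg: "z = 0" if "\<And>l. trace_ext q s (l * z) = 0" for z :: 'b
  proof (rule ccontr)
    assume z: "z \<noteq> 0"
    have "trace_ext q s ((e 0 * e' 0 / z) * z) = 0" using that .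
    thus False using z tr0 by simp
  qed
  have trdiff: "trace_ext q s (l * (x - y)) = trace_ext q s (x * l) - trace_ext q s (y * l)" for l x y :: 'b
  proof -
    have "trace_ext q s (x * l) = trace_ext q s (l * (x - y) + y * l)" by (simp add: algebra_simps)
    thus ?thesis by (simp add: fq.trace_add)
  qed
  have injpi: "inj \<pi>"
  proof (rule injI)
    fix x y assume "\<pi> x = \<pi> y"
    hence "trace_ext q s (x * l) = trace_ext q s (y * l)" for l
      using fq.iso_dot[OF iso, of x l] fq.iso_dot[OF iso, of y l] by simp
    hence "trace_ext q s (l * (x - y)) = 0" for l using trdiff[of l x y] by simp
    hence "x - y = 0" by (rule nondeg)
    thus "x = y" by simp
  qed
  have finpi: "finite (range \<pi>)" by simp
  have dd: "d_max_iso emb q s n \<le> hamming_dist (\<pi> x) (\<pi> y)" if "x \<noteq> y" for x y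
  proof -
    have "finite {hamming_dist u v |u v. u \<in> range \<pi> \<and> v \<in> range \<pi> \<and> u \<noteq> v}"
      by (rule finite_subset[of _ "(\<lambda>(u, v). hamming_dist u v) ` (range \<pi> \<times> range \<pi>)"]) auto
    moreover have "hamming_dist (\<pi> x) (\<pi> y) \<in> {hamming_dist u v |u v. u \<in> range \<pi> \<and> v \<in> range \<pi> \<and> u \<noteq> v}"
      using that injpi by (auto dest: injD)
    ultimately show ?thesis unfolding dmax[symmetric] min_dist_def by (rule Min_le)
  qed
  define C where "C = pi_tensor \<pi> ` hatC N a b"
  have lenH: "length d = 2 * N" if "d \<in> hatC N a b" for d
    using that unfolding hatC_enc by (auto simp: length_enc)
  have lenC: "\<forall>c\<in>C. length c = 2 * n * N"
    unfolding C_def using lenH length_pi_tensor[where \<pi>=\<pi>, OF len] by auto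
  have injpt: "inj_on (pi_tensor \<pi>) (hatC N a b)"
    by (rule inj_onI) (use pi_tensor_inj[where \<pi>=\<pi>, OF len injpi] lenH in auto)
  have cardC: "card C = q ^ (s * N)"
    unfolding C_def using card_image[OF injpt] card_hatC[of N a b] cardB by (simp add: power_mult)
  have finC: "finite C" unfolding C_def using finite_hatC[of N a b] by (rule finite_imageI)
  have mdC: "min_dist C \<ge> d_max_iso emb q s n * min_dist (hatC N a b)"
  proof -
    define SC where "SC = {hamming_dist x y |x y. x \<in> C \<and> y \<in> C \<and> x \<noteq> y}"
    define SH where "SH = {hamming_dist x y |x y. x \<in> hatC N a b \<and> y \<in> hatC N a b \<and> x \<noteq> y}"
    have finSC: "finite SC" unfolding SC_def
      by (rule finite_subset[of _ "(\<lambda>(u, v). hamming_dist u v) ` (C \<times> C)"]) (use finC in auto)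
    have finSH: "finite SH" unfolding SH_def
      by (rule finite_subset[of _ "(\<lambda>(u, v). hamming_dist u v) ` (hatC N a b \<times> hatC N a b)"]) (use finite_hatC[of N a b] in auto)
    have d01: "enc N a b (replicate N 0) \<in> hatC N a b" "enc N a b (replicate N 1) \<in> hatC N a b"
      unfolding hatC_enc by auto
    have "enc N a b (replicate N 0) \<noteq> enc N a b (replicate N 1)"
      using enc_inj[of "replicate N 0" N "replicate N 1" a b] N by auto
    hence "pi_tensor \<pi> (enc N a b (replicate N 0)) \<noteq> pi_tensor \<pi> (enc N a b (replicate N 1))"
      using injpt d01 by (auto dest: inj_onD)
    hence SCne: "SC \<noteq> {}" unfolding SC_def C_def using d01 by blast
    have "d_max_iso emb q s n * min_dist (hatC N a b) \<le> z" if "z \<in> SC" for z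
    proof -
      obtain d1 d2 where d: "d1 \<in> hatC N a b" "d2 \<in> hatC N a b" "pi_tensor \<pi> d1 \<noteq> pi_tensor \<pi> d2"
        "z = hamming_dist (pi_tensor \<pi> d1) (pi_tensor \<pi> d2)"
        using \<open>z \<in> SC\<close> unfolding SC_def C_def by blast
      have "d1 \<noteq> d2" using d(3) by blast
      hence "hamming_dist d1 d2 \<in> SH" unfolding SH_def using d by blast
      hence "min_dist (hatC N a b) \<le> hamming_dist d1 d2"
        unfolding min_dist_def SH_def[symmetric] using finSH by (rule Min_le[rotated])
      hence "d_max_iso emb q s n * min_dist (hatC N a b) \<le> d_max_iso emb q s n * hamming_dist d1 d2"
        by simp
      also have "\<dots> \<le> z" unfolding d(4)
        by (rule hamming_pi_tensor[where \<pi>=\<pi>, OF len dd]) (use lenH d in auto)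
      finally show ?thesis .
    qed
    thus ?thesis unfolding min_dist_def SC_def[symmetric] using finSC SCne by (simp add: Min_ge_iff)
  qed
  have pz: "\<pi> 0 = replicate n 0" by (rule pi_zero[OF lin emb])
  have zeroC: "replicate (2 * n * N) 0 \<in> C"
  proof -
    have "pi_tensor \<pi> (enc N a b (replicate N 0)) = replicate (2 * n * N) 0"
      by (simp add: enc_zero pt_replicate[where \<pi>=\<pi> and z=0, OF pz] mult_ac)
    moreover have "enc N a b (replicate N 0) \<in> hatC N a b" unfolding hatC_enc by auto
    ultimately show ?thesis unfolding C_def by (metis image_eqI)
  qed
  have zeroD: "replicate (2 * n * N) 0 \<in> dual_code (2 * n * N) C"
    unfolding dual_code_def by (simp add: dotp_zero_right)
  have charc: "of_nat p = (0::'c)"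
  proof -
    have "of_nat p = (0::'b)" using CB by (metis of_nat_CHAR)
    hence "h (of_nat p) = 0" using hom0[OF h] by simp
    thus ?thesis using hom_of_nat[OF h] by simp
  qed
  have sub: "y = replicate (2 * n * N) 0" if y: "y \<in> C" "y \<in> dual_code (2 * n * N) C" for y
  proof -
    obtain u where u: "length u = N" "y = pi_tensor \<pi> (enc N a b u)"
      using y(1) unfolding C_def hatC_enc by blast
    have orth: "dotp x y = 0" if "x \<in> C" for x using y(2) that unfolding dual_code_def by blast
    have orth2: "dotp (enc N a b v) (enc N a b u) = 0" if v: "length v = N" for v
    proof (rule nondeg)
      fix l
      have "enc N a b (map ((*) l) v) \<in> hatC N a b" unfolding hatC_enc using v by auto
      hence "dotp (pi_tensor \<pi> (enc N a b (map ((*) l) v))) y = 0" using orth unfolding C_def by blast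
      hence "emb (dotp (pi_tensor \<pi> (enc N a b (map ((*) l) v))) (pi_tensor \<pi> (enc N a b u))) = 0"
        using u hom0[OF emb] by simp
      hence "trace_ext q s (dotp (enc N a b (map ((*) l) v)) (enc N a b u)) = 0"
        using fq.pt_dot[OF iso len, of "enc N a b (map ((*) l) v)" "enc N a b u"] v u
        by (simp add: length_enc)
      moreover have "dotp (enc N a b (map ((*) l) v)) (enc N a b u) = l * dotp (enc N a b v) (enc N a b u)"
        by (simp only: enc_scale[OF v, symmetric] dotp_smult_left)
      ultimately show "trace_ext q s (l * dotp (enc N a b v) (enc N a b u)) = 0" by simp
    qed
    define T where "T = tridiag a b"
    have hyp: "u ! k + (\<Sum>j<N. (\<Sum>i<N. u ! i * T i j) * T k j) = 0" if k: "k < N" for k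
    proof -
      define v where "v = map (\<lambda>i. if i = k then (1::'b) else 0) [0..<N]"
      have lv: "length v = N" unfolding v_def by simp
      have vi: "(\<Sum>i<N. v ! i * T i j) = T k j" for j
      proof -
        have "(\<Sum>i<N. v ! i * T i j) = (\<Sum>i<N. if i = k then T k j else 0)"
          by (rule sum.cong) (auto simp: v_def)
        thus ?thesis using k by simp
      qed
      have dv: "dotp v u = u ! k"
      proof -
        have "dotp v u = (\<Sum>i<N. v ! i * u ! i)" using dotp_nth[of v u] lv u(1) by simp
        also have "\<dots> = (\<Sum>i<N. if i = k then u ! k else 0)" by (rule sum.cong) (auto simp: v_def)
        finally show ?thesis using k by simp
      qed
      have "0 = dotp (enc N a b v) (enc N a b u)" using orth2[OF lv] by simp
      also have "\<dots> = u ! k + (\<Sum>j<N. T k j * (\<Sum>i<N. u ! i * T i j))"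
        using dotp_enc[OF lv u(1), of a b] unfolding T_def[symmetric] by (simp add: vi dv)
      finally show ?thesis by (simp add: mult.commute)
    qed
    define U where "U i = h (u ! i)" for i
    have hypc: "\<forall>k<N. U k + (\<Sum>j<N. (\<Sum>i<N. U i * tridiag (h a) (h b) i j) * tridiag (h a) (h b) k j) = 0"
    proof (intro allI impI)
      fix k assume k: "k < N"
      have "h (u ! k + (\<Sum>j<N. (\<Sum>i<N. u ! i * T i j) * T k j)) = 0" using hyp[OF k] hom0[OF h] by simp
      thus "U k + (\<Sum>j<N. (\<Sum>i<N. U i * tridiag (h a) (h b) i j) * tridiag (h a) (h b) k j) = 0"
        unfolding U_def T_def by (simp add: hom_add[OF h] hom_sum[OF h] hom_mult[OF h] hom_tridiag[OF h])
    qed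
    have U0: "U k = 0" if "k < N" for k
    proof (rule ccontr)
      assume "U k \<noteq> 0"
      hence "\<exists>k<N. U k \<noteq> 0" using that by blast
      from alg_main[OF hypc mu hom_nonzero[OF h b] N this]
      show False by (rule S_contra[OF charc p N mdef r2 theta1 theta2 hom_nonzero[OF h b] S])
    qed
    have "u = replicate N 0"
    proof (rule nth_equalityI)
      show "length u = length (replicate N 0)" using u by simp
      fix i assume "i < length u"
      hence "h (u ! i) = h 0" using U0 u(1) hom0[OF h] unfolding U_def by simp
      thus "u ! i = replicate N 0 ! i" using hom_inj[OF h] \<open>i < length u\<close> u(1) by simp
    qed
    thus ?thesis using u(2) by (simp add: enc_zero pt_replicate[where \<pi>=\<pi> and z=0, OF pz] mult_ac)
  qed
  have lcd: "is_LCD (2 * n * N) C"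
    unfolding is_LCD_def using zeroC zeroD sub by blast
  show ?thesis unfolding Let_def C_def[symmetric] using lcd lenC cardC mdC by blast
qed

end
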